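(* Let $H$ be a numerical semigroup minimally generated by $a_1<a_2<\dots<a_n$ with $n>1$. If $H$ is quadratic, then (a) there exist $k,\ell\geq 2$ such that $a_1$ divides $a_k+a_\ell$; (b) $2a_i\in\langle a_1,\dots,a_{i-1},a_{i+1},\dots,a_n\rangle$ for all $2\leq i\leq n$.
   Context: A numerical semigroup is a submonoid of $\mathbb{N}$ with finite complement. $K$ is a field, $S=K[x_1,\dots,x_n]$ and $I_H=\ker(S\to K[t],\ x_i\mapsto t^{a_i})$. For $0\neq f\in S$, $f^*$ is its homogeneous component of least degree, and $I_H^*=(f^*:0\ne f\in I_H)$. $H$ is quadratic if $I_H^*$ is generated by homogeneous polynomials of degree 2. $\langle b_1,\dots,b_m\rangle$ denotes the semigroup generated by $b_1,\dots,b_m$. *)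

theory Defs
  imports "HOL-Library.Poly_Mapping"
begin

(* Generators a 1 < ... < a n are a function a :: nat => nat on indices {1..n}.
   Monomials: exponent vectors  nat =>0 nat  (variable x_i has index i).
   Polynomials over the field 'k:  (nat =>0 nat) =>0 'k.
   Univariate K[t]:  nat =>0 'k. *)


definition sg_gen :: "(nat \<Rightarrow> nat) \<Rightarrow> nat set \<Rightarrow> nat set" where
  "sg_gen a J = {s. \<exists>c::nat \<Rightarrow> nat. s = (\<Sum>j\<in>J. c j * a j)}"

definition min_gen_numerical :: "(nat \<Rightarrow> nat) \<Rightarrow> nat \<Rightarrow> bool" where
  "min_gen_numerical a n \<longleftrightarrow>
     (\<forall>i j. 1 \<le> i \<and> i < j \<and> j \<le> n \<longrightarrow> a i < a j) \<and>
     finite (UNIV - sg_gen a {1..n}) \<and>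
     (\<forall>i\<in>{1..n}. a i \<notin> sg_gen a ({1..n} - {i}))"

definition in_S :: "nat \<Rightarrow> ((nat \<Rightarrow>\<^sub>0 nat) \<Rightarrow>\<^sub>0 'k::field) \<Rightarrow> bool" where
  "in_S n f \<longleftrightarrow> (\<forall>m\<in>Poly_Mapping.keys f. Poly_Mapping.keys m \<subseteq> {1..n})"

definition tdeg :: "(nat \<Rightarrow>\<^sub>0 nat) \<Rightarrow> nat" where
  "tdeg m = (\<Sum>i\<in>Poly_Mapping.keys m. Poly_Mapping.lookup m i)"

text \<open>The map S -> K[t], x_i |-> t^(a i).\<close>
definition sg_map :: "(nat \<Rightarrow> nat) \<Rightarrow> nat \<Rightarrow> ((nat \<Rightarrow>\<^sub>0 nat) \<Rightarrow>\<^sub>0 'k::field) \<Rightarrow> (nat \<Rightarrow>\<^sub>0 'k)" where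
  "sg_map a n f = (\<Sum>m\<in>Poly_Mapping.keys f. Poly_Mapping.single (\<Sum>i\<in>{1..n}. a i * Poly_Mapping.lookup m i) (Poly_Mapping.lookup f m))"

definition I_H :: "(nat \<Rightarrow> nat) \<Rightarrow> nat \<Rightarrow> ((nat \<Rightarrow>\<^sub>0 nat) \<Rightarrow>\<^sub>0 'k::field) set" where
  "I_H a n = {f. in_S n f \<and> sg_map a n f = 0}"

text \<open>Homogeneous component of least degree (f nonzero).\<close>
definition initial_form :: "((nat \<Rightarrow>\<^sub>0 nat) \<Rightarrow>\<^sub>0 'k::field) \<Rightarrow> ((nat \<Rightarrow>\<^sub>0 nat) \<Rightarrow>\<^sub>0 'k)" where
  "initial_form f = (let d = Min (tdeg ` Poly_Mapping.keys f) in
      (\<Sum>m\<in>{m\<in>Poly_Mapping.keys f. tdeg m = d}. Poly_Mapping.single m (Poly_Mapping.lookup f m)))"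

definition homogeneous :: "nat \<Rightarrow> ((nat \<Rightarrow>\<^sub>0 nat) \<Rightarrow>\<^sub>0 'k::field) \<Rightarrow> bool" where
  "homogeneous d f \<longleftrightarrow> (\<forall>m\<in>Poly_Mapping.keys f. tdeg m = d)"

definition ideal_gen :: "nat \<Rightarrow> ((nat \<Rightarrow>\<^sub>0 nat) \<Rightarrow>\<^sub>0 'k::field) set \<Rightarrow> ((nat \<Rightarrow>\<^sub>0 nat) \<Rightarrow>\<^sub>0 'k) set" where
  "ideal_gen n G = {f. \<exists>F c. finite F \<and> F \<subseteq> G \<and> (\<forall>g\<in>F. in_S n (c g))
                        \<and> f = (\<Sum>g\<in>F. c g * g)}"

definition I_H_star :: "'k::field itself \<Rightarrow> (nat \<Rightarrow> nat) \<Rightarrow> nat \<Rightarrow> ((nat \<Rightarrow>\<^sub>0 nat) \<Rightarrow>\<^sub>0 'k) set" where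
  "I_H_star _ a n = ideal_gen n (initial_form ` (I_H a n - {0}))"

definition quadratic :: "'k::field itself \<Rightarrow> (nat \<Rightarrow> nat) \<Rightarrow> nat \<Rightarrow> bool" where
  "quadratic K a n \<longleftrightarrow>
     (\<exists>G::((nat \<Rightarrow>\<^sub>0 nat) \<Rightarrow>\<^sub>0 'k) set. (\<forall>g\<in>G. in_S n g \<and> homogeneous 2 g) \<and> ideal_gen n G = I_H_star K a n)"

end

theory Submission
  imports Defs
begin


lemma pm_sum_single:
  fixes p :: "'a \<Rightarrow>\<^sub>0 'b::comm_monoid_add"
  shows "p = (\<Sum>k\<in>Poly_Mapping.keys p. Poly_Mapping.single k (Poly_Mapping.lookup p k))"
proof (rule poly_mapping_eqI)
  fix x
  have "Poly_Mapping.lookup (\<Sum>k\<in>Poly_Mapping.keys p. Poly_Mapping.single k (Poly_Mapping.lookup p k)) x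
      = (\<Sum>k\<in>Poly_Mapping.keys p. (if k = x then Poly_Mapping.lookup p k else 0))"
    by (simp add: lookup_sum lookup_single when_def)
  also have "\<dots> = Poly_Mapping.lookup p x"
    by (simp add: sum.delta in_keys_iff)
  finally show "Poly_Mapping.lookup p x = Poly_Mapping.lookup (\<Sum>k\<in>Poly_Mapping.keys p. Poly_Mapping.single k (Poly_Mapping.lookup p k)) x" by simp
qed

definition Psi :: "(nat \<Rightarrow>\<^sub>0 nat) set \<Rightarrow> (nat \<Rightarrow>\<^sub>0 nat) \<Rightarrow> ((nat \<Rightarrow>\<^sub>0 nat) \<Rightarrow>\<^sub>0 'k::field) \<Rightarrow> 'k" where
  "Psi R t p = (\<Sum>k\<in>{k\<in>Poly_Mapping.keys p. t + k \<in> R}. Poly_Mapping.lookup p k)"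

lemma Psi_alt:
  assumes "finite S" "Poly_Mapping.keys p \<subseteq> S"
  shows "Psi R t p = (\<Sum>k\<in>S. if t + k \<in> R then Poly_Mapping.lookup p k else 0)"
proof -
  have "Psi R t p = (\<Sum>k\<in>Poly_Mapping.keys p. if t + k \<in> R then Poly_Mapping.lookup p k else 0)"
    unfolding Psi_def by (simp add: sum.inter_filter)
  also have "\<dots> = (\<Sum>k\<in>S. if t + k \<in> R then Poly_Mapping.lookup p k else 0)"
    by (rule sum.mono_neutral_left) (use assms in \<open>auto simp: in_keys_iff\<close>)
  finally show ?thesis .
qed

lemma Psi_add: "Psi R t (p + q) = Psi R t p + Psi R t q"
proof -
  let ?S = "Poly_Mapping.keys p \<union> Poly_Mapping.keys q"
  have f: "finite ?S" by simp
  have k: "Poly_Mapping.keys (p + q) \<subseteq> ?S" by (rule keys_add)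
  have 1: "Psi R t (p+q) = (\<Sum>k\<in>?S. if t + k \<in> R then Poly_Mapping.lookup (p+q) k else 0)"
    by (rule Psi_alt[OF f k])
  have 2: "Psi R t p = (\<Sum>k\<in>?S. if t + k \<in> R then Poly_Mapping.lookup p k else 0)"
    by (rule Psi_alt[OF f]) blast
  have 3: "Psi R t q = (\<Sum>k\<in>?S. if t + k \<in> R then Poly_Mapping.lookup q k else 0)"
    by (rule Psi_alt[OF f]) blast
  have 4: "(\<Sum>k\<in>?S. if t + k \<in> R then Poly_Mapping.lookup (p+q) k else 0) = 
     (\<Sum>k\<in>?S. (if t + k \<in> R then Poly_Mapping.lookup p k else 0) + (if t + k \<in> R then Poly_Mapping.lookup q k else 0))"
    by (rule sum.cong) (simp_all add: lookup_add)
  show ?thesis unfolding 1 2 3 4 by (rule sum.distrib)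
qed

lemma Psi_zero [simp]: "Psi R t 0 = 0"
  by (simp add: Psi_def)

lemma Psi_sum: "finite A \<Longrightarrow> Psi R t (\<Sum>x\<in>A. f x) = (\<Sum>x\<in>A. Psi R t (f x))"
  by (induction A rule: finite_induct) (simp_all add: Psi_add)

lemma Psi_single: "Psi R t (Poly_Mapping.single m v) = (if t + m \<in> R then v else 0)"
proof (cases "v = 0")
  case False
  then have "{k\<in>Poly_Mapping.keys (Poly_Mapping.single m v). t + k \<in> R} = (if t + m \<in> R then {m} else {})"
    by auto
  then show ?thesis unfolding Psi_def by simp
qed (simp add: Psi_def)

lemma single_mult_expand:
  fixes p :: "(nat \<Rightarrow>\<^sub>0 nat) \<Rightarrow>\<^sub>0 'k::field"
  shows "Poly_Mapping.single u c * p = (\<Sum>k\<in>Poly_Mapping.keys p. Poly_Mapping.single (u + k) (c * Poly_Mapping.lookup p k))"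
proof -
  have "Poly_Mapping.single u c * p = Poly_Mapping.single u c * (\<Sum>k\<in>Poly_Mapping.keys p. Poly_Mapping.single k (Poly_Mapping.lookup p k))"
    by (subst pm_sum_single[of p]) simp
  also have "\<dots> = (\<Sum>k\<in>Poly_Mapping.keys p. Poly_Mapping.single (u + k) (c * Poly_Mapping.lookup p k))"
    by (simp add: sum_distrib_left mult_single)
  finally show ?thesis .
qed

lemma Psi_single_mult:
  "Psi R t (Poly_Mapping.single u c * p) = c * Psi R (t + u) p"
proof -
  have "Psi R t (Poly_Mapping.single u c * p) = (\<Sum>k\<in>Poly_Mapping.keys p. if t + (u + k) \<in> R then c * Poly_Mapping.lookup p k else 0)"
    by (simp add: single_mult_expand Psi_sum Psi_single)
  also have "\<dots> = c * (\<Sum>k\<in>Poly_Mapping.keys p. if (t + u) + k \<in> R then Poly_Mapping.lookup p k else 0)"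
    by (simp add: sum_distrib_left add.assoc if_distrib cong: if_cong)
  also have "\<dots> = c * Psi R (t + u) p"
    by (subst Psi_alt[of "Poly_Mapping.keys p"]) auto
  finally show ?thesis .
qed

lemma Psi_mult:
  "Psi R t (q * p) = (\<Sum>u\<in>Poly_Mapping.keys q. Poly_Mapping.lookup q u * Psi R (t + u) p)"
proof -
  have "Psi R t (q * p) = Psi R t ((\<Sum>u\<in>Poly_Mapping.keys q. Poly_Mapping.single u (Poly_Mapping.lookup q u)) * p)"
    by (subst pm_sum_single[of q]) simp
  also have "\<dots> = (\<Sum>u\<in>Poly_Mapping.keys q. Poly_Mapping.lookup q u * Psi R (t + u) p)"
    by (simp add: sum_distrib_right Psi_sum Psi_single_mult)
  finally show ?thesis .
qed

lemma Psi_nz: "Psi R t p \<noteq> 0 \<Longrightarrow> \<exists>k\<in>Poly_Mapping.keys p. t + k \<in> R"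
  unfolding Psi_def by (metis (mono_tags, lifting) mem_Collect_eq sum.neutral)

lemma Psi_ideal:
  assumes "p \<in> ideal_gen n G" "Psi R t p \<noteq> 0"
  shows "\<exists>g\<in>G. \<exists>u. Psi R (t + u) g \<noteq> 0"
proof -
  from assms(1) obtain F c where F: "finite F" "F \<subseteq> G" "p = (\<Sum>g\<in>F. c g * g)"
    unfolding ideal_gen_def by blast
  have "Psi R t p = (\<Sum>g\<in>F. \<Sum>u\<in>Poly_Mapping.keys (c g). Poly_Mapping.lookup (c g) u * Psi R (t + u) g)"
    using F by (simp add: Psi_sum Psi_mult)
  with assms(2) obtain g where "g \<in> F" "(\<Sum>u\<in>Poly_Mapping.keys (c g). Poly_Mapping.lookup (c g) u * Psi R (t + u) g) \<noteq> 0"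
    using sum.neutral by force
  then obtain u where "Psi R (t + u) g \<noteq> 0"
    using sum.neutral by force
  with F \<open>g \<in> F\<close> show ?thesis by blast
qed

lemma gen_in_ideal: "g \<in> G \<Longrightarrow> g \<in> ideal_gen n G"
  unfolding ideal_gen_def
  by (rule CollectI, rule exI[of _ "{g}"], rule exI[of _ "\<lambda>_. 1"]) (simp add: in_S_def)



definition wt :: "(nat \<Rightarrow> nat) \<Rightarrow> nat \<Rightarrow> (nat \<Rightarrow>\<^sub>0 nat) \<Rightarrow> nat" where
  "wt a n m = (\<Sum>i\<in>{1..n}. a i * Poly_Mapping.lookup m i)"

lemma sg_map_wt: "sg_map a n f = (\<Sum>m\<in>Poly_Mapping.keys f. Poly_Mapping.single (wt a n m) (Poly_Mapping.lookup f m))"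
  by (simp add: sg_map_def wt_def)

lemma lookup_sg_map:
  "Poly_Mapping.lookup (sg_map a n f) w = (\<Sum>m\<in>{m\<in>Poly_Mapping.keys f. wt a n m = w}. Poly_Mapping.lookup f m)"
  by (simp add: sg_map_wt lookup_sum lookup_single when_def sum.inter_filter)

lemma partner:
  assumes "h \<in> I_H a n" "m \<in> Poly_Mapping.keys h"
  shows "\<exists>m'\<in>Poly_Mapping.keys h. m' \<noteq> m \<and> wt a n m' = wt a n m"
proof (rule ccontr)
  assume "\<not> ?thesis"
  then have "{m'\<in>Poly_Mapping.keys h. wt a n m' = wt a n m} = {m}" using assms(2) by auto
  then have "Poly_Mapping.lookup (sg_map a n h) (wt a n m) = Poly_Mapping.lookup h m"
    by (simp add: lookup_sg_map)
  moreover have "sg_map a n h = 0" using assms(1) by (simp add: I_H_def)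
  ultimately show False using assms(2) by (simp add: in_keys_iff)
qed

lemma tdeg_sum: "finite S \<Longrightarrow> Poly_Mapping.keys m \<subseteq> S \<Longrightarrow> tdeg m = (\<Sum>i\<in>S. Poly_Mapping.lookup m i)"
  unfolding tdeg_def by (rule sum.mono_neutral_left) (auto simp: in_keys_iff)

lemma tdeg_add: "tdeg (p + q) = tdeg p + tdeg q"
proof -
  let ?S = "Poly_Mapping.keys p \<union> Poly_Mapping.keys q"
  have "tdeg (p+q) = (\<Sum>i\<in>?S. Poly_Mapping.lookup (p+q) i)" by (rule tdeg_sum) (auto dest: keys_add[THEN subsetD])
  also have "\<dots> = (\<Sum>i\<in>?S. Poly_Mapping.lookup p i) + (\<Sum>i\<in>?S. Poly_Mapping.lookup q i)"
    by (simp add: lookup_add sum.distrib)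
  also have "\<dots> = tdeg p + tdeg q" by (subst (1 2) tdeg_sum[of ?S]) auto
  finally show ?thesis .
qed

lemma wt_add: "wt a n (p + q) = wt a n p + wt a n q"
  by (simp add: wt_def lookup_add distrib_left sum.distrib)

lemma tdeg_0: "tdeg m = 0 \<Longrightarrow> m = (0::nat \<Rightarrow>\<^sub>0 nat)"
  unfolding tdeg_def
  by (rule poly_mapping_eqI) (metis finite_keys in_keys_iff lookup_zero sum_eq_0_iff)

lemma tdeg_single: "tdeg (Poly_Mapping.single i (k::nat)) = k"
  by (simp add: tdeg_def)

lemma tdeg_peel:
  assumes "j \<in> Poly_Mapping.keys (m::nat \<Rightarrow>\<^sub>0 nat)"
  shows "m = Poly_Mapping.single j 1 + (m - Poly_Mapping.single j 1)"
    "tdeg (m - Poly_Mapping.single j 1) + 1 = tdeg m"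
proof -
  have "Poly_Mapping.lookup m j \<ge> 1" using assms by (simp add: in_keys_iff)
  then show e: "m = Poly_Mapping.single j 1 + (m - Poly_Mapping.single j 1)"
    by (intro poly_mapping_eqI) (auto simp: lookup_add lookup_minus lookup_single when_def)
  show "tdeg (m - Poly_Mapping.single j 1) + 1 = tdeg m"
    by (subst (2) e) (simp add: tdeg_add tdeg_single)
qed

lemma tdeg_1:
  assumes "tdeg m = 1" shows "\<exists>j\<in>Poly_Mapping.keys m. m = Poly_Mapping.single j 1"
proof -
  have "Poly_Mapping.keys m \<noteq> {}" using assms by (auto simp: tdeg_def)
  then obtain j where j: "j \<in> Poly_Mapping.keys m" by blast
  have "m - Poly_Mapping.single j 1 = 0" using tdeg_peel(2)[OF j] assms tdeg_0 by simp
  then show ?thesis using tdeg_peel(1)[OF j] j by auto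
qed

lemma tdeg_2:
  assumes "tdeg m = 2"
  shows "\<exists>k\<in>Poly_Mapping.keys m. \<exists>l\<in>Poly_Mapping.keys m. m = Poly_Mapping.single k 1 + Poly_Mapping.single l 1"
proof -
  have "Poly_Mapping.keys m \<noteq> {}" using assms by (auto simp: tdeg_def)
  then obtain k where k: "k \<in> Poly_Mapping.keys m" by blast
  have "tdeg (m - Poly_Mapping.single k 1) = 1" using tdeg_peel(2)[OF k] assms by simp
  then obtain l where l: "l \<in> Poly_Mapping.keys (m - Poly_Mapping.single k 1)"
     "m - Poly_Mapping.single k 1 = Poly_Mapping.single l 1" using tdeg_1 by blast
  have "l \<in> Poly_Mapping.keys m" using l(1) by (auto simp: in_keys_iff lookup_minus)
  then show ?thesis using tdeg_peel(1)[OF k] l(2) k by metis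
qed

lemma keys_add_nat: "Poly_Mapping.keys (u::nat \<Rightarrow>\<^sub>0 nat) \<subseteq> Poly_Mapping.keys (u + k)"
  by (auto simp: in_keys_iff lookup_add)

lemma sub_single:
  assumes "u + k = Poly_Mapping.single i (N::nat)"
  shows "k = Poly_Mapping.single i (Poly_Mapping.lookup k i)" "Poly_Mapping.lookup k i \<le> N"
proof -
  have l: "\<And>j. Poly_Mapping.lookup u j + Poly_Mapping.lookup k j = (if i = j then N else 0)"
  proof -
    fix j
    have "Poly_Mapping.lookup (u + k) j = Poly_Mapping.lookup (Poly_Mapping.single i N) j" using assms by simp
    then show "Poly_Mapping.lookup u j + Poly_Mapping.lookup k j = (if i = j then N else 0)"
      by (simp add: lookup_add lookup_single when_def)
  qed
  show "k = Poly_Mapping.single i (Poly_Mapping.lookup k i)"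
  proof (rule poly_mapping_eqI)
    fix j show "Poly_Mapping.lookup k j = Poly_Mapping.lookup (Poly_Mapping.single i (Poly_Mapping.lookup k i)) j"
    proof (cases "i = j")
      case False then show ?thesis using l[of j] by (simp add: lookup_single when_def)
    qed simp
  qed
  show "Poly_Mapping.lookup k i \<le> N" using l[of i] by simp
qed

lemma mg_pos: "min_gen_numerical a n \<Longrightarrow> i \<in> {1..n} \<Longrightarrow> 0 < a i"
proof (rule ccontr)
  assume mg: "min_gen_numerical a n" and i: "i \<in> {1..n}" and "\<not> 0 < a i"
  then have "a i = 0" by simp
  moreover have "0 \<in> sg_gen a ({1..n} - {i})"
    unfolding sg_gen_def by (rule CollectI, rule exI[of _ "\<lambda>_. 0"]) simp
  ultimately show False using mg i unfolding min_gen_numerical_def by metis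
qed

lemma mg_mono: "min_gen_numerical a n \<Longrightarrow> 1 \<le> i \<Longrightarrow> i < j \<Longrightarrow> j \<le> n \<Longrightarrow> a i < a j"
  unfolding min_gen_numerical_def by blast

lemma mg_min: "min_gen_numerical a n \<Longrightarrow> i \<in> {1..n} \<Longrightarrow> a i \<notin> sg_gen a ({1..n} - {i})"
  unfolding min_gen_numerical_def by blast

lemma wt_single: "i \<in> {1..n} \<Longrightarrow> wt a n (Poly_Mapping.single i k) = a i * k"
proof -
  assume i: "i \<in> {1..n}"
  have "wt a n (Poly_Mapping.single i k) = (\<Sum>j\<in>{1..n}. if i = j then a j * k else 0)"
    unfolding wt_def by (rule sum.cong) (auto simp: lookup_single when_def)
  also have "\<dots> = a i * k" using i by (simp add: sum.delta)
  finally show ?thesis .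
qed

lemma wt_split: "i \<in> {1..n} \<Longrightarrow> wt a n m = a i * Poly_Mapping.lookup m i + (\<Sum>j\<in>{1..n}-{i}. a j * Poly_Mapping.lookup m j)"
  unfolding wt_def by (simp add: sum.remove)

lemma W:
  fixes h :: "(nat \<Rightarrow>\<^sub>0 nat) \<Rightarrow>\<^sub>0 'k::field"
  assumes mg: "min_gen_numerical a n" and h: "h \<in> I_H a n" and i: "i \<in> {1..n}"
    and k: "Poly_Mapping.single i k \<in> Poly_Mapping.keys h" "k \<le> 2"
  shows "k = 2 \<and> 2 * a i \<in> sg_gen a ({1..n} - {i})"
proof -
  obtain m' where m': "m' \<in> Poly_Mapping.keys h" "m' \<noteq> Poly_Mapping.single i k"
    "wt a n m' = wt a n (Poly_Mapping.single i k)"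
    using partner[OF h k(1)] by blast
  have ks: "Poly_Mapping.keys m' \<subseteq> {1..n}" using h m'(1) by (auto simp: I_H_def in_S_def)
  define r where "r = Poly_Mapping.lookup m' i"
  define rest where "rest = (\<Sum>j\<in>{1..n}-{i}. a j * Poly_Mapping.lookup m' j)"
  have ai: "0 < a i" using mg_pos[OF mg i] .
  have eq: "a i * k = a i * r + rest"
    using m'(3) wt_split[OF i, of a m'] wt_single[OF i, of a k] unfolding r_def rest_def by simp
  have rest_in: "rest \<in> sg_gen a ({1..n}-{i})"
    unfolding sg_gen_def rest_def by (rule CollectI, rule exI[of _ "Poly_Mapping.lookup m'"]) (simp add: mult.commute)
  show ?thesis
  proof (cases "rest = 0")
    case True
    have z: "\<forall>j\<in>{1..n}-{i}. Poly_Mapping.lookup m' j = 0"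
    proof
      fix j assume j: "j \<in> {1..n}-{i}"
      have "a j * Poly_Mapping.lookup m' j = 0" using True j unfolding rest_def
        by (simp add: sum_eq_0_iff)
      moreover have "0 < a j" using mg_pos[OF mg, of j] j by auto
      ultimately show "Poly_Mapping.lookup m' j = 0" by simp
    qed
    have "r = k" using eq True ai by simp
    have "m' = Poly_Mapping.single i k"
    proof (rule poly_mapping_eqI)
      fix j
      show "Poly_Mapping.lookup m' j = Poly_Mapping.lookup (Poly_Mapping.single i k) j"
      proof (cases "j = i")
        case True then show ?thesis using \<open>r = k\<close> r_def by simp
      next
        case False
        have "Poly_Mapping.lookup m' j = 0"
        proof (cases "j \<in> {1..n}")
          case True then show ?thesis using z False by blast
        next
          case False then show ?thesis using ks by (auto simp: in_keys_iff)
        qed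
        then show ?thesis using False by (simp add: lookup_single when_def)
      qed
    qed
    then show ?thesis using m'(2) by blast
  next
    case False
    then have "a i * r < a i * k" using eq by simp
    then have "r < k" by simp
    then have re: "rest = a i * (k - r)" using eq by (simp add: diff_mult_distrib2)
    show ?thesis
    proof (cases "k - r = 1")
      case True
      then show ?thesis using re rest_in mg_min[OF mg i] by simp
    next
      case False
      then have "k = 2" "r = 0" using \<open>r < k\<close> k(2) by auto
      then show ?thesis using re rest_in by (simp add: mult.commute)
    qed
  qed
qed

lemma deg2:
  fixes h :: "(nat \<Rightarrow>\<^sub>0 nat) \<Rightarrow>\<^sub>0 'k::field"
  assumes mg: "min_gen_numerical a n" and n: "1 \<le> n" and h: "h \<in> I_H a n" and m: "m \<in> Poly_Mapping.keys h"
  shows "2 \<le> tdeg m"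
proof (rule ccontr)
  assume "\<not> 2 \<le> tdeg m"
  then consider "tdeg m = 0" | "tdeg m = 1" by linarith
  then show False
  proof cases
    case 1
    then have "m = Poly_Mapping.single 1 0" using tdeg_0 by simp
    then show False using W[OF mg h, of 1 0] m n by simp
  next
    case 2
    then obtain j where j: "j \<in> Poly_Mapping.keys m" "m = Poly_Mapping.single j 1" using tdeg_1 by blast
    have "j \<in> {1..n}" using h m j(1) unfolding I_H_def in_S_def by blast
    then show False using W[OF mg h, of j 1] m j by simp
  qed
qed

lemma lookup_initial:
  "Poly_Mapping.lookup (initial_form h) x =
    (if x \<in> Poly_Mapping.keys h \<and> tdeg x = Min (tdeg ` Poly_Mapping.keys h) then Poly_Mapping.lookup h x else 0)"
proof -
  let ?A = "{m\<in>Poly_Mapping.keys h. tdeg m = Min (tdeg ` Poly_Mapping.keys h)}"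
  have "Poly_Mapping.lookup (initial_form h) x = (\<Sum>m\<in>?A. if m = x then Poly_Mapping.lookup h m else 0)"
    unfolding initial_form_def Let_def by (simp add: lookup_sum lookup_single when_def)
  also have "\<dots> = (if x \<in> ?A then Poly_Mapping.lookup h x else 0)"
    by (simp add: sum.delta')
  finally show ?thesis by simp
qed

lemma keys_initial:
  "x \<in> Poly_Mapping.keys (initial_form h) \<Longrightarrow> x \<in> Poly_Mapping.keys h \<and> tdeg x = Min (tdeg ` Poly_Mapping.keys h)"
proof -
  assume "x \<in> Poly_Mapping.keys (initial_form h)"
  then have "Poly_Mapping.lookup (initial_form h) x \<noteq> 0" by (simp add: in_keys_iff)
  then show ?thesis unfolding lookup_initial by (metis (full_types))
qed

lemma binom:
  fixes p q :: "nat \<Rightarrow>\<^sub>0 nat"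
  assumes kp: "Poly_Mapping.keys p \<subseteq> {1..n}" and kq: "Poly_Mapping.keys q \<subseteq> {1..n}"
    and w: "wt a n p = wt a n q" and d: "tdeg p < tdeg q"
  shows "(Poly_Mapping.single p 1 - Poly_Mapping.single q (1::'k::field)) \<in> I_H a n - {0}"
    "initial_form (Poly_Mapping.single p 1 - Poly_Mapping.single q (1::'k::field)) = Poly_Mapping.single p 1"
proof -
  define f where "f = Poly_Mapping.single p 1 - Poly_Mapping.single q (1::'k)"
  have pq: "p \<noteq> q" using d by auto
  have lf: "\<And>x. Poly_Mapping.lookup f x = (if x = p then 1 else if x = q then -1 else 0)"
    unfolding f_def using pq by (auto simp: lookup_minus lookup_single when_def)
  have kf: "Poly_Mapping.keys f = {p, q}"
    by (auto simp: in_keys_iff lf split: if_splits)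
  have inS: "in_S n f" unfolding in_S_def kf using kp kq by blast
  have "sg_map a n f = Poly_Mapping.single (wt a n p) 1 + Poly_Mapping.single (wt a n q) (-1)"
    unfolding sg_map_wt kf using pq by (simp add: lf)
  also have "\<dots> = 0" unfolding w by (simp add: single_add[symmetric])
  finally have "sg_map a n f = 0" .
  moreover have "f \<noteq> 0" using lf[of p] by auto
  ultimately show "f \<in> I_H a n - {0}" using inS by (simp add: I_H_def)
  have mn: "Min (tdeg ` Poly_Mapping.keys f) = tdeg p" unfolding kf using d by simp
  show "initial_form f = Poly_Mapping.single p 1"
  proof (rule poly_mapping_eqI)
    fix x
    show "Poly_Mapping.lookup (initial_form f) x = Poly_Mapping.lookup (Poly_Mapping.single p 1) x"
      unfolding lookup_initial mn kf using d by (auto simp: lf lookup_single when_def)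
  qed
qed

lemma part_b:
  fixes a :: "nat \<Rightarrow> nat" and n :: nat
  assumes mg: "min_gen_numerical a n" and n: "n > 1"
    and qd: "quadratic TYPE('k::field) a n" and i: "2 \<le> i" "i \<le> n"
  shows "2 * a i \<in> sg_gen a ({1..n} - {i})"
proof -
  obtain G :: "((nat \<Rightarrow>\<^sub>0 nat) \<Rightarrow>\<^sub>0 'k) set" where
    G: "\<forall>g\<in>G. in_S n g \<and> homogeneous 2 g" "ideal_gen n G = I_H_star TYPE('k) a n"
    using qd unfolding quadratic_def by blast
  have i1: "i \<in> {1..n}" using i by auto
  have one: "1 \<in> {1..n}" using n by auto
  define p where "p = Poly_Mapping.single i (a 1)"
  define q where "q = Poly_Mapping.single (1::nat) (a i)"
  have kp: "Poly_Mapping.keys p \<subseteq> {1..n}" unfolding p_def using i1 by simp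
  have kq: "Poly_Mapping.keys q \<subseteq> {1..n}" unfolding q_def using one by simp
  have w: "wt a n p = wt a n q" unfolding p_def q_def using wt_single[OF i1] wt_single[OF one] by simp
  have d: "tdeg p < tdeg q" unfolding p_def q_def tdeg_single using mg_mono[OF mg, of 1 i] i by simp
  have "Poly_Mapping.single p (1::'k) \<in> initial_form ` (I_H a n - {0})"
    using binom[OF kp kq w d, where 'k='k] by (metis image_eqI)
  then have "Poly_Mapping.single p (1::'k) \<in> ideal_gen n G"
    unfolding G(2) I_H_star_def by (rule gen_in_ideal)
  moreover have "Psi {p} 0 (Poly_Mapping.single p (1::'k)) \<noteq> 0" by (simp add: Psi_single)
  ultimately obtain g u where g: "g \<in> G" "Psi {p} u g \<noteq> 0"
    using Psi_ideal by fastforce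
  obtain k where k: "k \<in> Poly_Mapping.keys g" "u + k = p" using Psi_nz[OF g(2)] by blast
  have "tdeg k = 2" using G(1) g(1) k(1) unfolding homogeneous_def by blast
  moreover have "k = Poly_Mapping.single i (Poly_Mapping.lookup k i)"
    using sub_single(1)[of u k i "a 1"] k(2) unfolding p_def by blast
  ultimately have k2: "k = Poly_Mapping.single i 2" by (metis tdeg_single)
  have "g \<in> ideal_gen n (initial_form ` (I_H a n - {0}))"
    using gen_in_ideal[OF g(1), of n] G(2) unfolding I_H_star_def by simp
  moreover have "Psi {Poly_Mapping.single i 2} 0 g \<noteq> 0"
  proof -
    have "{k\<in>Poly_Mapping.keys g. 0 + k \<in> {Poly_Mapping.single i 2}} = {Poly_Mapping.single i 2}"
      using k(1) k2 by auto
    then show ?thesis unfolding Psi_def using k(1) k2 by (simp add: in_keys_iff)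
  qed
  ultimately have "\<exists>g\<in>(initial_form ` (I_H a n - {0}) :: ((nat \<Rightarrow>\<^sub>0 nat) \<Rightarrow>\<^sub>0 'k) set). \<exists>u. Psi {Poly_Mapping.single i 2} (0 + u) g \<noteq> 0"
    by (rule Psi_ideal)
  then obtain hs :: "(nat \<Rightarrow>\<^sub>0 nat) \<Rightarrow>\<^sub>0 'k" and u' where hs1: "hs \<in> initial_form ` (I_H a n - {0})"
     and hs3: "Psi {Poly_Mapping.single i 2} (0 + u') hs \<noteq> 0"
    by blast
  have hs2: "Psi {Poly_Mapping.single i 2} u' hs \<noteq> 0" using hs3 by simp
  obtain h where h: "h \<in> I_H a n" "hs = initial_form h" using hs1 by blast
  obtain k' where k': "k' \<in> Poly_Mapping.keys hs" "u' + k' = Poly_Mapping.single i 2" using Psi_nz[OF hs2] by blast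
  have kk: "k' = Poly_Mapping.single i (Poly_Mapping.lookup k' i)" "Poly_Mapping.lookup k' i \<le> 2"
    by (rule sub_single[OF k'(2)])+
  have "k' \<in> Poly_Mapping.keys h" using keys_initial k'(1) h(2) by blast
  then have "Poly_Mapping.single i (Poly_Mapping.lookup k' i) \<in> Poly_Mapping.keys h" using kk(1) by metis
  then show ?thesis using W[OF mg h(1) i1 _ kk(2)] by blast
qed

lemma wt2:
  assumes "Poly_Mapping.keys m \<subseteq> {2..n}"
  shows "wt a n m = (\<Sum>j\<in>{2..n}. a j * Poly_Mapping.lookup m j)"
  unfolding wt_def
proof (rule sum.mono_neutral_right)
  show "\<forall>i\<in>{1..n} - {2..n}. a i * Poly_Mapping.lookup m i = 0"
  proof
    fix i assume "i \<in> {1..n} - {2..n}"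
    then have "i \<notin> Poly_Mapping.keys m" using assms by auto
    then show "a i * Poly_Mapping.lookup m i = 0" by (simp add: in_keys_iff)
  qed
qed auto

lemma wt_bound:
  assumes mg: "min_gen_numerical a n" and k: "Poly_Mapping.keys m \<subseteq> {2..n}"
  shows "(a 1 + 1) * tdeg m \<le> wt a n m"
proof -
  have "(a 1 + 1) * tdeg m = (\<Sum>j\<in>{2..n}. (a 1 + 1) * Poly_Mapping.lookup m j)"
    using tdeg_sum[OF _ k] by (simp add: sum_distrib_left)
  also have "\<dots> \<le> (\<Sum>j\<in>{2..n}. a j * Poly_Mapping.lookup m j)"
  proof (rule sum_mono)
    fix j assume "j \<in> {2..n}"
    then have "a 1 < a j" using mg_mono[OF mg, of 1 j] by auto
    then show "(a 1 + 1) * Poly_Mapping.lookup m j \<le> a j * Poly_Mapping.lookup m j"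
      by (intro mult_right_mono) auto
  qed
  also have "\<dots> = wt a n m" using wt2[OF k] by simp
  finally show ?thesis .
qed

lemma part_a:
  fixes a :: "nat \<Rightarrow> nat" and n :: nat
  assumes mg: "min_gen_numerical a n" and n: "n > 1"
    and qd: "quadratic TYPE('k::field) a n"
  shows "\<exists>k l. 2 \<le> k \<and> k \<le> n \<and> 2 \<le> l \<and> l \<le> n \<and> a 1 dvd (a k + a l)"
proof (rule ccontr)
  assume NA: "\<not> ?thesis"
  obtain G :: "((nat \<Rightarrow>\<^sub>0 nat) \<Rightarrow>\<^sub>0 'k) set" where
    G: "\<forall>g\<in>G. in_S n g \<and> homogeneous 2 g" "ideal_gen n G = I_H_star TYPE('k) a n"
    using qd unfolding quadratic_def by blast
  have one: "(1::nat) \<in> {1..n}" using n by auto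
  have two: "(2::nat) \<in> {1..n}" using n by auto
  have a1pos: "0 < a 1" using mg_pos[OF mg one] .
  define P where "P c \<longleftrightarrow> 1 \<le> c \<and> c * a 1 \<in> sg_gen a {2..n}" for c
  have "P (a 2)"
  proof -
    have "(\<Sum>j\<in>{2..n}. (if j = 2 then a 1 else 0) * a j) = (\<Sum>j\<in>{2..n}. if j = 2 then a 1 * a j else 0)"
      by (rule sum.cong) auto
    also have "\<dots> = a 1 * a 2" using n by (simp add: sum.delta)
    finally have "a 2 * a 1 = (\<Sum>j\<in>{2..n}. (if j = 2 then a 1 else 0) * a j)" by (simp add: mult.commute)
    then have "a 2 * a 1 \<in> sg_gen a {2..n}" unfolding sg_gen_def
      by (intro CollectI exI[of _ "\<lambda>j. if j = 2 then a 1 else 0"])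
    moreover have "1 \<le> a 2" using mg_pos[OF mg two] by simp
    ultimately show ?thesis unfolding P_def by blast
  qed
  define c where "c = (LEAST c. P c)"
  have Pc: "P c" unfolding c_def by (rule LeastI[of P, OF \<open>P (a 2)\<close>])
  have cmin: "\<And>c'. P c' \<Longrightarrow> c \<le> c'" unfolding c_def by (rule Least_le[of P])
  have c1: "1 \<le> c" using Pc P_def by simp
  obtain cc where cc: "c * a 1 = (\<Sum>j\<in>{2..n}. cc j * a j)" using Pc unfolding P_def sg_gen_def by blast
  define m0 :: "nat \<Rightarrow>\<^sub>0 nat" where "m0 = (\<Sum>j\<in>{2..n}. Poly_Mapping.single j (cc j))"
  have lm0: "\<And>j. Poly_Mapping.lookup m0 j = (if j \<in> {2..n} then cc j else 0)"
    unfolding m0_def by (simp add: lookup_sum lookup_single when_def sum.delta)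
  have km0: "Poly_Mapping.keys m0 \<subseteq> {2..n}" by (auto simp: in_keys_iff lm0 split: if_splits)
  have wm0: "wt a n m0 = c * a 1" unfolding wt2[OF km0] cc by (rule sum.cong) (auto simp: lm0)
  define M where "M = {m. Poly_Mapping.keys m \<subseteq> {2..n} \<and> wt a n m = c * a 1}"
  have m0M: "m0 \<in> M" using km0 wm0 M_def by simp
  have Mb: "\<And>m. m \<in> M \<Longrightarrow> tdeg m \<le> c * a 1"
  proof -
    fix m assume "m \<in> M"
    then have km: "Poly_Mapping.keys m \<subseteq> {2..n}" and wm: "wt a n m = c * a 1" using M_def by auto
    have "(a 1 + 1) * tdeg m \<le> c * a 1" using wt_bound[OF mg km] wm by simp
    then show "tdeg m \<le> c * a 1" by (metis le_add2 le_trans mult_le_mono1 mult_1)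
  qed
  have finD: "finite (tdeg ` M)" by (rule finite_subset[of _ "{0..c * a 1}"]) (auto dest: Mb)
  define B where "B = Max (tdeg ` M)"
  have BM: "\<And>m. m \<in> M \<Longrightarrow> tdeg m \<le> B" unfolding B_def using finD by simp
  have "B \<in> tdeg ` M" unfolding B_def using finD m0M by (intro Max_in) auto
  then obtain b where b: "b \<in> M" "tdeg b = B" by blast
  have kb: "Poly_Mapping.keys b \<subseteq> {2..n}" and wb: "wt a n b = c * a 1" using b(1) M_def by auto
  have Bc: "B < c"
  proof (rule ccontr)
    assume "\<not> B < c"
    then have "(a 1 + 1) * c \<le> (a 1 + 1) * B" by (intro mult_le_mono2) simp
    also have "\<dots> \<le> c * a 1" using wt_bound[OF mg kb] b(2) wb by simp
    finally show False using c1 by simp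
  qed
  have B2: "B \<noteq> 2"
  proof
    assume "B = 2"
    then obtain k l where kl: "k \<in> Poly_Mapping.keys b" "l \<in> Poly_Mapping.keys b"
      "b = Poly_Mapping.single k 1 + Poly_Mapping.single l 1" using tdeg_2 b(2) by blast
    have kl2: "k \<in> {2..n}" "l \<in> {2..n}" using kl kb by auto
    have "wt a n b = a k + a l" using kl(3) kl2 by (simp add: wt_add wt_single)
    then have "a k + a l = a 1 * c" using wb by (metis mult.commute)
    then have "a 1 dvd a k + a l" by (metis dvd_triv_left)
    then show False using NA kl2 by auto
  qed
  have kb1: "Poly_Mapping.keys b \<subseteq> {1..n}" using kb by auto
  define q :: "nat \<Rightarrow>\<^sub>0 nat" where "q = Poly_Mapping.single 1 c"
  have kq: "Poly_Mapping.keys q \<subseteq> {1..n}" unfolding q_def using one by simp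
  have wq: "wt a n b = wt a n q" unfolding q_def using wt_single[OF one, of a c] wb by simp
  have dq: "tdeg b < tdeg q" unfolding q_def tdeg_single using b(2) Bc by simp
  have "Poly_Mapping.single b (1::'k) \<in> initial_form ` (I_H a n - {0})"
    using binom[OF kb1 kq wq dq, where 'k='k] by (metis image_eqI)
  then have bI: "Poly_Mapping.single b (1::'k) \<in> ideal_gen n G"
    unfolding G(2) I_H_star_def by (rule gen_in_ideal)
  define R where "R = {m. Poly_Mapping.keys m \<subseteq> {2..n} \<and> wt a n m = c * a 1 \<and> tdeg m = B}"
  have "Psi R 0 (Poly_Mapping.single b (1::'k)) \<noteq> 0" using kb wb b(2) by (simp add: Psi_single R_def)
  then have "\<exists>g\<in>G. \<exists>u. Psi R (0 + u) g \<noteq> 0" by (rule Psi_ideal[OF bI])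
  then obtain g u where g: "g \<in> G" "Psi R (0 + u) g \<noteq> 0" by blast
  have g2: "Psi R u g \<noteq> 0" using g(2) by simp
  obtain k where k: "k \<in> Poly_Mapping.keys g" "u + k \<in> R" using Psi_nz[OF g2] by blast
  have tk: "tdeg k = 2" using G(1) g(1) k(1) unfolding homogeneous_def by blast
  have uR: "Poly_Mapping.keys (u + k) \<subseteq> {2..n}" "tdeg (u + k) = B" using k(2) R_def by auto
  have tu: "tdeg u + 2 = B" using uR(2) tk by (simp add: tdeg_add)
  have ku: "Poly_Mapping.keys u \<subseteq> {2..n}" using keys_add_nat[of u k] uR(1) by blast
  have "g \<in> ideal_gen n (initial_form ` (I_H a n - {0}))"
    using gen_in_ideal[OF g(1), of n] G(2) unfolding I_H_star_def by simp
  then have "\<exists>g\<in>(initial_form ` (I_H a n - {0}) :: ((nat \<Rightarrow>\<^sub>0 nat) \<Rightarrow>\<^sub>0 'k) set). \<exists>u'. Psi R (u + u') g \<noteq> 0"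
    by (rule Psi_ideal[OF _ g2])
  then obtain hs :: "(nat \<Rightarrow>\<^sub>0 nat) \<Rightarrow>\<^sub>0 'k" and u' where hs1: "hs \<in> initial_form ` (I_H a n - {0})"
     and hs3: "Psi R (u + u') hs \<noteq> 0"
    by blast
  obtain h where h: "h \<in> I_H a n" "hs = initial_form h" using hs1 by blast
  obtain k' where k': "k' \<in> Poly_Mapping.keys hs" "u + u' + k' \<in> R" using Psi_nz[OF hs3] by blast
  have k'h: "k' \<in> Poly_Mapping.keys h" "tdeg k' = Min (tdeg ` Poly_Mapping.keys h)"
    using keys_initial k'(1) h(2) by blast+
  have n1: "1 \<le> n" using n by simp
  have "2 \<le> tdeg k'" by (rule deg2[OF mg n1 h(1) k'h(1)])
  moreover have "tdeg u + tdeg u' + tdeg k' = B" using k'(2) R_def by (simp add: tdeg_add)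
  ultimately have tu': "tdeg u' = 0" and tk': "tdeg k' = 2" using tu by arith+
  have "u' = 0" using tdeg_0[OF tu'] .
  then have hs4: "Psi R u hs \<noteq> 0" using hs3 by simp
  have dmin: "Min (tdeg ` Poly_Mapping.keys h) = 2" using k'h(2) tk' by simp
  have claim: "\<And>x. x \<in> Poly_Mapping.keys h \<Longrightarrow> (u + x \<in> R \<and> tdeg x = 2) \<longleftrightarrow> wt a n x + wt a n u = c * a 1"
  proof
    fix x assume "x \<in> Poly_Mapping.keys h" "u + x \<in> R \<and> tdeg x = 2"
    then show "wt a n x + wt a n u = c * a 1" using R_def by (simp add: wt_add)
  next
    fix x assume xh: "x \<in> Poly_Mapping.keys h" and wx: "wt a n x + wt a n u = c * a 1"
    have kx: "Poly_Mapping.keys x \<subseteq> {1..n}" using h(1) xh by (auto simp: I_H_def in_S_def)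
    have tx2: "2 \<le> tdeg x" by (rule deg2[OF mg n1 h(1) xh])
    define d1 where "d1 = Poly_Mapping.lookup x 1"
    have e12: "{1..n} - {1} = {2..n}" by auto
    have wxs: "wt a n x = a 1 * d1 + (\<Sum>j\<in>{2..n}. a j * Poly_Mapping.lookup x j)"
      using wt_split[OF one, of a x] unfolding e12 d1_def .
    have wus: "wt a n u = (\<Sum>j\<in>{2..n}. a j * Poly_Mapping.lookup u j)" by (rule wt2[OF ku])
    define S where "S = (\<Sum>j\<in>{2..n}. (Poly_Mapping.lookup x j + Poly_Mapping.lookup u j) * a j)"
    have Seq: "S = (\<Sum>j\<in>{2..n}. a j * Poly_Mapping.lookup x j) + (\<Sum>j\<in>{2..n}. a j * Poly_Mapping.lookup u j)"
      unfolding S_def by (simp add: sum.distrib[symmetric] algebra_simps)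
    have cS: "c * a 1 = a 1 * d1 + S" using wx wxs wus Seq by simp
    have "tdeg u \<noteq> 0" using tu B2 by auto
    then have "Poly_Mapping.keys u \<noteq> {}" by (auto simp: tdeg_def)
    then obtain j0 where j0: "j0 \<in> Poly_Mapping.keys u" by blast
    have j02: "j0 \<in> {2..n}" using j0 ku by auto
    have "0 < (Poly_Mapping.lookup x j0 + Poly_Mapping.lookup u j0) * a j0"
      using j0 mg_pos[OF mg, of j0] j02 by (auto simp: in_keys_iff)
    also have "\<dots> \<le> S" unfolding S_def by (rule member_le_sum) (use j02 in auto)
    finally have Spos: "0 < S" .
    show "u + x \<in> R \<and> tdeg x = 2"
    proof (cases "d1 = 0")
      case False
      have "a 1 * d1 < a 1 * c" using cS Spos by (simp add: mult.commute)
      then have d1c: "d1 < c" by simp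
      have Sd: "(c - d1) * a 1 = S" using cS by (simp add: diff_mult_distrib mult.commute)
      have "S \<in> sg_gen a {2..n}" unfolding sg_gen_def S_def
        by (intro CollectI exI[of _ "\<lambda>j. Poly_Mapping.lookup x j + Poly_Mapping.lookup u j"]) (rule refl)
      then have "P (c - d1)" unfolding P_def using Sd d1c by simp
      then have "c \<le> c - d1" by (rule cmin)
      then show ?thesis using False d1c by simp
    next
      case True
      have kx2: "Poly_Mapping.keys x \<subseteq> {2..n}"
      proof
        fix j assume j: "j \<in> Poly_Mapping.keys x"
        then have "j \<noteq> 1" using True d1_def by (auto simp: in_keys_iff)
        then show "j \<in> {2..n}" using kx j by auto
      qed
      have kux: "Poly_Mapping.keys (u + x) \<subseteq> {2..n}" using keys_add[of u x] ku kx2 by blast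
      have wux: "wt a n (u + x) = c * a 1" using wx by (simp add: wt_add)
      have "u + x \<in> M" using kux wux M_def by simp
      then have "tdeg (u + x) \<le> B" by (rule BM)
      then have "tdeg x = 2" using tu tx2 by (simp add: tdeg_add)
      moreover have "u + x \<in> R" using kux wux tu \<open>tdeg x = 2\<close> R_def by (simp add: tdeg_add)
      ultimately show ?thesis by simp
    qed
  qed
  have "Psi R u hs = (\<Sum>x\<in>Poly_Mapping.keys h. if u + x \<in> R then Poly_Mapping.lookup hs x else 0)"
    by (rule Psi_alt) (use keys_initial h(2) in auto)
  also have "\<dots> = (\<Sum>x\<in>Poly_Mapping.keys h. if wt a n x + wt a n u = c * a 1 then Poly_Mapping.lookup h x else 0)"
  proof (rule sum.cong)
    fix x assume xh: "x \<in> Poly_Mapping.keys h"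
    show "(if u + x \<in> R then Poly_Mapping.lookup hs x else 0) = (if wt a n x + wt a n u = c * a 1 then Poly_Mapping.lookup h x else 0)"
      using claim[OF xh] xh unfolding h(2) lookup_initial dmin by auto
  qed simp
  also have "\<dots> = 0"
  proof (cases "wt a n u \<le> c * a 1")
    case True
    have "(\<Sum>x\<in>Poly_Mapping.keys h. if wt a n x + wt a n u = c * a 1 then Poly_Mapping.lookup h x else 0)
        = (\<Sum>x\<in>Poly_Mapping.keys h. if wt a n x = c * a 1 - wt a n u then Poly_Mapping.lookup h x else 0)"
      by (rule sum.cong) (use True in auto)
    also have "\<dots> = Poly_Mapping.lookup (sg_map a n h) (c * a 1 - wt a n u)"
      by (simp add: lookup_sg_map sum.inter_filter)
    also have "\<dots> = 0" using h(1) by (simp add: I_H_def)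
    finally show ?thesis .
  next
    case False
    then show ?thesis by (intro sum.neutral) auto
  qed
  finally show False using hs4 by simp
qed


theorem lemma1p6:
  fixes a :: "nat \<Rightarrow> nat" and n :: nat
  assumes "min_gen_numerical a n" and "n > 1"
    and "quadratic TYPE('k::field) a n"
  shows "(\<exists>k l. 2 \<le> k \<and> k \<le> n \<and> 2 \<le> l \<and> l \<le> n \<and> a 1 dvd (a k + a l))
       \<and> (\<forall>i. 2 \<le> i \<and> i \<le> n \<longrightarrow> 2 * a i \<in> sg_gen a ({1..n} - {i}))"
  using part_a[OF assms] part_b[OF assms] by blast

end
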